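(* On a Klein bottle with a flat metric, two distinct closed geodesics without self-intersections cannot intersect in exactly three points. *)

theory Defs
  imports Main "HOL.Real"
begin

text \<open>Flat Klein bottle model: the plane modulo the group generated by the
glide reflection (x,y) -> (x + a, -y) and the translation (x,y) -> (x, y + b),
with a, b > 0.  Its elements are exactly the maps
(x,y) -> (x + m a, (-1)^m y + n b) for integers m, n.
Every flat Klein bottle is isometric to one of these.\<close>

definition kb_rel :: "real \<Rightarrow> real \<Rightarrow> real \<times> real \<Rightarrow> real \<times> real \<Rightarrow> bool" where
  "kb_rel a b P Q \<longleftrightarrow>
     (\<exists>m n :: int. fst Q = fst P + of_int m * a \<and>
        snd Q = (if even m then snd P else - snd P) + of_int n * b)"

definition kb_pt :: "real \<Rightarrow> real \<Rightarrow> real \<times> real \<Rightarrow> (real \<times> real) set" where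
  "kb_pt a b P = {Q. kb_rel a b P Q}"

definition line :: "real \<times> real \<Rightarrow> real \<times> real \<Rightarrow> real \<Rightarrow> real \<times> real" where
  "line P V t = (fst P + t * fst V, snd P + t * snd V)"

definition simple_closed_geodesic ::
  "real \<Rightarrow> real \<Rightarrow> real \<times> real \<Rightarrow> real \<times> real \<Rightarrow> real \<Rightarrow> bool" where
  "simple_closed_geodesic a b P V L \<longleftrightarrow>
     V \<noteq> (0, 0) \<and> L > 0 \<and>
     (\<forall>t. kb_pt a b (line P V (t + L)) = kb_pt a b (line P V t)) \<and>
     (\<forall>s\<in>{0..<L}. \<forall>t\<in>{0..<L}.
        kb_pt a b (line P V s) = kb_pt a b (line P V t) \<longrightarrow> s = t)"

definition geodesic_image :: "real \<Rightarrow> real \<Rightarrow> real \<times> real \<Rightarrow> real \<times> real \<Rightarrow> (real \<times> real) set set" where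
  "geodesic_image a b P V = range (\<lambda>t. kb_pt a b (line P V t))"

end

theory Submission
  imports Defs
begin

lemma kb_rel_refl: "kb_rel a b P P"
  unfolding kb_rel_def by (rule exI[of _ 0], rule exI[of _ 0]) simp

lemma kb_rel_sym: assumes "kb_rel a b P Q" shows "kb_rel a b Q P"
proof -
  obtain m n :: int where h: "fst Q = fst P + of_int m * a"
    "snd Q = (if even m then snd P else - snd P) + of_int n * b"
    using assms unfolding kb_rel_def by blast
  show ?thesis unfolding kb_rel_def
  proof (cases "even m")
    case True
    then show "\<exists>m n :: int. fst P = fst Q + of_int m * a \<and>
        snd P = (if even m then snd Q else - snd Q) + of_int n * b"
      using h by (intro exI[of _ "-m"] exI[of _ "-n"]) (auto simp: algebra_simps)
  next
    case False
    then show "\<exists>m n :: int. fst P = fst Q + of_int m * a \<and>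
        snd P = (if even m then snd Q else - snd Q) + of_int n * b"
      using h by (intro exI[of _ "-m"] exI[of _ "n"]) (auto simp: algebra_simps)
  qed
qed

lemma kb_rel_trans: assumes "kb_rel a b P Q" "kb_rel a b Q R" shows "kb_rel a b P R"
proof -
  obtain m n :: int where h: "fst Q = fst P + of_int m * a"
    "snd Q = (if even m then snd P else - snd P) + of_int n * b"
    using assms(1) unfolding kb_rel_def by blast
  obtain m' n' :: int where h': "fst R = fst Q + of_int m' * a"
    "snd R = (if even m' then snd Q else - snd Q) + of_int n' * b"
    using assms(2) unfolding kb_rel_def by blast
  show ?thesis unfolding kb_rel_def
    using h h'
    by (intro exI[of _ "m + m'"] exI[of _ "if even m' then n + n' else n' - n"])
       (auto simp: algebra_simps)
qed

lemma kb_pt_eq: "kb_pt a b P = kb_pt a b Q \<longleftrightarrow> kb_rel a b P Q"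
proof
  assume "kb_pt a b P = kb_pt a b Q"
  then have "Q \<in> kb_pt a b P" using kb_rel_refl unfolding kb_pt_def by blast
  then show "kb_rel a b P Q" unfolding kb_pt_def by simp
next
  assume r: "kb_rel a b P Q"
  show "kb_pt a b P = kb_pt a b Q" unfolding kb_pt_def
    using r kb_rel_sym kb_rel_trans by blast
qed

definition vimg :: "real \<Rightarrow> real \<Rightarrow> real \<Rightarrow> (real \<times> real) set set" where
  "vimg a b c = range (\<lambda>y. kb_pt a b (c, y))"
definition himg :: "real \<Rightarrow> real \<Rightarrow> real \<Rightarrow> (real \<times> real) set set" where
  "himg a b c = range (\<lambda>x. kb_pt a b (x, c))"

lemma img_vert: assumes "fst V = 0" "snd V \<noteq> 0"
  shows "geodesic_image a b P V = vimg a b (fst P)"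
  unfolding geodesic_image_def vimg_def
proof (intro equalityI subsetI)
  fix z assume "z \<in> range (\<lambda>t. kb_pt a b (line P V t))"
  then obtain t where "z = kb_pt a b (line P V t)" by blast
  then have "z = kb_pt a b (fst P, snd P + t * snd V)" using assms by (simp add: line_def)
  then show "z \<in> range (\<lambda>y. kb_pt a b (fst P, y))" by blast
next
  fix z assume "z \<in> range (\<lambda>y. kb_pt a b (fst P, y))"
  then obtain y where z: "z = kb_pt a b (fst P, y)" by blast
  have "line P V ((y - snd P) / snd V) = (fst P, y)" using assms by (simp add: line_def)
  then show "z \<in> range (\<lambda>t. kb_pt a b (line P V t))" using z by (metis rangeI)
qed

lemma img_hor: assumes "snd V = 0" "fst V \<noteq> 0"
  shows "geodesic_image a b P V = himg a b (snd P)"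
  unfolding geodesic_image_def himg_def
proof (intro equalityI subsetI)
  fix z assume "z \<in> range (\<lambda>t. kb_pt a b (line P V t))"
  then obtain t where "z = kb_pt a b (line P V t)" by blast
  then have "z = kb_pt a b (fst P + t * fst V, snd P)" using assms by (simp add: line_def)
  then show "z \<in> range (\<lambda>x. kb_pt a b (x, snd P))" by blast
next
  fix z assume "z \<in> range (\<lambda>x. kb_pt a b (x, snd P))"
  then obtain x where z: "z = kb_pt a b (x, snd P)" by blast
  have "line P V ((x - fst P) / fst V) = (x, snd P)" using assms by (simp add: line_def)
  then show "z \<in> range (\<lambda>t. kb_pt a b (line P V t))" using z by (metis rangeI)
qed

lemma vv_sub: assumes "vimg a b c1 \<inter> vimg a b c2 \<noteq> {}" shows "vimg a b c1 \<subseteq> vimg a b c2"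
proof -
  obtain y1 y2 where "kb_pt a b (c1, y1) = kb_pt a b (c2, y2)"
    using assms unfolding vimg_def by blast
  then have "kb_rel a b (c1, y1) (c2, y2)" by (simp add: kb_pt_eq)
  then obtain m :: int where m: "c2 = c1 + of_int m * a" unfolding kb_rel_def by auto
  show ?thesis unfolding vimg_def
  proof
    fix z assume "z \<in> range (\<lambda>y. kb_pt a b (c1, y))"
    then obtain y where z: "z = kb_pt a b (c1, y)" by blast
    have "kb_rel a b (c1, y) (c2, if even m then y else - y)"
      unfolding kb_rel_def using m by (intro exI[of _ m] exI[of _ 0]) simp
    then have "z = kb_pt a b (c2, if even m then y else - y)" using z kb_pt_eq by blast
    then show "z \<in> range (\<lambda>y. kb_pt a b (c2, y))" by blast
  qed
qed

lemma hh_sub: assumes "himg a b c1 \<inter> himg a b c2 \<noteq> {}" shows "himg a b c1 \<subseteq> himg a b c2"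
proof -
  obtain x1 x2 where "kb_pt a b (x1, c1) = kb_pt a b (x2, c2)"
    using assms unfolding himg_def by blast
  then have "kb_rel a b (x1, c1) (x2, c2)" by (simp add: kb_pt_eq)
  then obtain m n :: int where mn: "c2 = (if even m then c1 else - c1) + of_int n * b"
    unfolding kb_rel_def by (metis snd_conv)
  show ?thesis unfolding himg_def
  proof
    fix z assume "z \<in> range (\<lambda>x. kb_pt a b (x, c1))"
    then obtain x where z: "z = kb_pt a b (x, c1)" by blast
    have "kb_rel a b (x, c1) (x + of_int m * a, c2)"
      unfolding kb_rel_def using mn by (intro exI[of _ m] exI[of _ n]) simp
    then have "z = kb_pt a b (x + of_int m * a, c2)" using z kb_pt_eq by blast
    then show "z \<in> range (\<lambda>x. kb_pt a b (x, c2))" by blast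
  qed
qed

lemma vh_sub: "vimg a b c \<inter> himg a b d \<subseteq> {kb_pt a b (c, d), kb_pt a b (c, - d)}"
proof
  fix z assume "z \<in> vimg a b c \<inter> himg a b d"
  then obtain y x where z: "z = kb_pt a b (c, y)" and zx: "z = kb_pt a b (x, d)"
    unfolding vimg_def himg_def by blast
  then have "kb_rel a b (x, d) (c, y)" by (simp add: kb_pt_eq)
  then obtain m n :: int where mn: "y = (if even m then d else - d) + of_int n * b"
    unfolding kb_rel_def by (metis snd_conv)
  have "kb_rel a b (c, if even m then d else - d) (c, y)"
    unfolding kb_rel_def using mn by (intro exI[of _ 0] exI[of _ n]) simp
  then have "z = kb_pt a b (c, if even m then d else - d)" using z kb_pt_eq by metis
  then show "z \<in> {kb_pt a b (c, d), kb_pt a b (c, - d)}" by (auto split: if_splits)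
qed

lemma card_vh: "card (vimg a b c \<inter> himg a b d) \<le> 2"
proof -
  have "card (vimg a b c \<inter> himg a b d) \<le> card {kb_pt a b (c, d), kb_pt a b (c, - d)}"
    by (rule card_mono) (simp, rule vh_sub)
  also have "\<dots> \<le> 2" by (simp add: card_insert_if)
  finally show ?thesis .
qed

lemma int_step: fixes h c w :: real assumes "h > 0"
  shows "\<exists>k::int. c \<le> w + of_int k * h \<and> w + of_int k * h < c + h"
proof -
  define k where "k = \<lceil>(c - w) / h\<rceil>"
  have k1: "(c - w) / h \<le> of_int k" unfolding k_def by (rule le_of_int_ceiling)
  have k2: "of_int k < (c - w) / h + 1" unfolding k_def using ceiling_correct[of "(c - w) / h"] by linarith
  have "c - w \<le> of_int k * h" using k1 assms by (simp add: divide_le_eq)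
  moreover have "of_int k * h < c - w + h" using k2 assms
    by (simp add: less_divide_eq distrib_right field_simps)
  ultimately show ?thesis by (intro exI[of _ k]) auto
qed

lemma classify:
  assumes a: "a > 0" and b: "b > 0" and g: "simple_closed_geodesic a b P V L"
  shows "fst V = 0 \<or> snd V = 0"
proof (rule ccontr)
  assume "\<not> (fst V = 0 \<or> snd V = 0)"
  then have v1: "fst V \<noteq> 0" and v2: "snd V \<noteq> 0" by auto
  define x0 where "x0 = fst P"
  define y0 where "y0 = snd P"
  define w1 where "w1 = fst V"
  define w2 where "w2 = snd V"
  have L: "L > 0" using g unfolding simple_closed_geodesic_def by auto
  have per: "\<And>t. kb_pt a b (line P V (t + L)) = kb_pt a b (line P V t)"
    using g unfolding simple_closed_geodesic_def by auto
  have inj: "\<And>s t. s \<in> {0..<L} \<Longrightarrow> t \<in> {0..<L} \<Longrightarrow>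
      kb_pt a b (line P V s) = kb_pt a b (line P V t) \<Longrightarrow> s = t"
    using g unfolding simple_closed_geodesic_def by auto
  have cl: "\<exists>m n::int. x0 + (t + L) * w1 = x0 + t * w1 + of_int m * a \<and>
      y0 + (t + L) * w2 = (if even m then y0 + t * w2 else - (y0 + t * w2)) + of_int n * b" for t
  proof -
    have "kb_rel a b (line P V t) (line P V (t + L))" using per[of t] kb_pt_eq by metis
    then obtain m n :: int where "fst (line P V (t + L)) = fst (line P V t) + of_int m * a"
      "snd (line P V (t + L)) = (if even m then snd (line P V t) else - snd (line P V t)) + of_int n * b"
      unfolding kb_rel_def by blast
    then show ?thesis unfolding line_def x0_def y0_def w1_def w2_def
      by (intro exI[of _ m] exI[of _ n]) simp
  qed
  obtain m0 n0 :: int where h0: "x0 + (0 + L) * w1 = x0 + 0 * w1 + of_int m0 * a"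
      "y0 + (0 + L) * w2 = (if even m0 then y0 + 0 * w2 else - (y0 + 0 * w2)) + of_int n0 * b"
    using cl[of 0] by blast
  have Lw1: "L * w1 = of_int m0 * a" using h0(1) by simp
  have ev: "even m0"
  proof (rule ccontr)
    assume od: "odd m0"
    define t1 where "t1 = b / (4 * w2)"
    obtain m1 n1 :: int where h1: "x0 + (t1 + L) * w1 = x0 + t1 * w1 + of_int m1 * a"
      "y0 + (t1 + L) * w2 = (if even m1 then y0 + t1 * w2 else - (y0 + t1 * w2)) + of_int n1 * b"
      using cl[of t1] by blast
    have "of_int m1 * a = of_int m0 * a" using h1(1) Lw1 by (simp add: algebra_simps) (metis mult.commute)
    then have "m1 = m0" using a by simp
    then have e1: "y0 + t1 * w2 + L * w2 = - y0 - t1 * w2 + of_int n1 * b"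
      using h1(2) od by (simp add: algebra_simps)
    have e0: "y0 + L * w2 = - y0 + of_int n0 * b" using h0(2) od by simp
    have tw: "t1 * w2 = b / 4" unfolding t1_def using v2 w2_def by simp
    have "b / 2 = of_int (n1 - n0) * b" using e1 e0 tw by (simp add: algebra_simps)
    then have "1 / 2 = (of_int (n1 - n0) :: real)" using b
      by (metis divide_self_if mult.commute nonzero_divide_eq_eq less_irrefl times_divide_eq_right)
    then have "of_int (2 * (n1 - n0)) = (1::real)" by simp
    then have "2 * (n1 - n0) = 1" by (metis of_int_eq_1_iff)
    then show False by presburger
  qed
  have Lw2: "L * w2 = of_int n0 * b" using h0(2) ev by simp
  have m0nz: "m0 \<noteq> 0" using Lw1 L v1 w1_def by auto
  have m0ge: "\<bar>m0\<bar> \<ge> 2" using m0nz ev by presburger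
  have n0nz: "n0 \<noteq> 0" using Lw2 L v2 w2_def by auto
  have n0ge: "\<bar>n0\<bar> \<ge> 1" using n0nz by presburger
  define m' :: int where "m' = (if w1 > 0 then 1 else -1)"
  define d where "d = of_int m' * a / w1"
  have dpos: "d > 0" unfolding d_def m'_def using a v1 w1_def
    by (auto simp: divide_neg_neg divide_pos_neg)
  have dw: "d * \<bar>w1\<bar> = a" unfolding d_def m'_def using v1 w1_def by auto
  have "L * \<bar>w1\<bar> = of_int \<bar>m0\<bar> * a" using Lw1 a L
    by (metis abs_mult abs_of_pos of_int_abs)
  also have "\<dots> \<ge> 2 * a" using m0ge a
    by (metis mult_right_mono of_int_le_iff of_int_numeral less_imp_le)
  finally have "2 * d * \<bar>w1\<bar> \<le> L * \<bar>w1\<bar>" using dw by (simp add: algebra_simps)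
  then have d2: "2 * d \<le> L" using v1 w1_def by simp
  define h where "h = \<bar>b / w2\<bar>"
  have hpos: "h > 0" unfolding h_def using b v2 w2_def by simp
  have hw: "h * \<bar>w2\<bar> = b" unfolding h_def using b v2 w2_def by (simp add: abs_divide)
  have "L * \<bar>w2\<bar> = of_int \<bar>n0\<bar> * b" using Lw2 b L
    by (metis abs_mult abs_of_pos of_int_abs)
  also have "\<dots> \<ge> b" using n0ge b
    by (metis mult_right_mono of_int_le_iff of_int_1 mult_1 less_imp_le)
  finally have "h * \<bar>w2\<bar> \<le> L * \<bar>w2\<bar>" using hw by simp
  then have hL: "h \<le> L" using v2 w2_def by simp
  obtain k :: int where k: "d \<le> - 2 * y0 / w2 + of_int k * h"
      "- 2 * y0 / w2 + of_int k * h < d + h"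
    using int_step[OF hpos] by blast
  define n' :: int where "n' = (if w2 > 0 then k else - k)"
  define u where "u = - 2 * y0 / w2 + of_int k * h"
  have uw: "u * w2 = of_int n' * b - 2 * y0"
  proof (cases "w2 > 0")
    case True
    then have "h = b / w2" unfolding h_def using b by simp
    then show ?thesis unfolding u_def n'_def using True by (simp add: field_simps)
  next
    case False
    then have "w2 < 0" using v2 w2_def by simp
    then have "h = - (b / w2)" unfolding h_def using b by (simp add: divide_pos_neg)
    then have "h * w2 = - b" using \<open>w2 < 0\<close> by (simp add: field_simps)
    then show ?thesis unfolding u_def n'_def using \<open>w2 < 0\<close>
      by (simp add: field_simps) (metis mult.assoc mult.commute mult_minus_left)
  qed
  define t where "t = (u - d) / 2"
  define s where "s = (u + d) / 2"
  have t0: "t \<in> {0..<L}" unfolding t_def using k u_def d2 hL dpos by auto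
  have s0: "s \<in> {0..<L}" unfolding s_def using k u_def d2 hL dpos by auto
  have om: "odd m'" unfolding m'_def by simp
  have e1: "(s - t) * w1 = of_int m' * a" unfolding s_def t_def d_def using v1 w1_def by (simp add: field_simps)
  have e2: "(s + t) * w2 = of_int n' * b - 2 * y0" unfolding s_def t_def using uw by (simp add: field_simps)
  have "kb_rel a b (line P V t) (line P V s)"
    unfolding kb_rel_def line_def using om e1 e2 unfolding w1_def w2_def y0_def
    by (intro exI[of _ m'] exI[of _ n']) (simp add: algebra_simps)
  then have "kb_pt a b (line P V s) = kb_pt a b (line P V t)"
    using kb_pt_eq kb_rel_sym by metis
  then have "s = t" using inj s0 t0 by blast
  then show False unfolding s_def t_def using dpos by simp
qed

lemma img_cases:
  assumes "a > 0" "b > 0" "simple_closed_geodesic a b P V L"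
  shows "geodesic_image a b P V = vimg a b (fst P) \<or> geodesic_image a b P V = himg a b (snd P)"
proof -
  have "V \<noteq> (0, 0)" using assms(3) unfolding simple_closed_geodesic_def by auto
  then have "fst V \<noteq> 0 \<or> snd V \<noteq> 0" by (cases V) auto
  then show ?thesis using classify[OF assms] img_vert img_hor by metis
qed

theorem mainTheorem9:
  fixes a b L1 L2 :: real and P1 V1 P2 V2 :: "real \<times> real"
  assumes "a > 0" and "b > 0"
    and "simple_closed_geodesic a b P1 V1 L1"
    and "simple_closed_geodesic a b P2 V2 L2"
    and "geodesic_image a b P1 V1 \<noteq> geodesic_image a b P2 V2"
  shows "card (geodesic_image a b P1 V1 \<inter> geodesic_image a b P2 V2) \<noteq> 3"
proof -
  note c1 = img_cases[OF assms(1,2,3)] and c2 = img_cases[OF assms(1,2,4)]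
  have vv: "\<And>x y. vimg a b x \<noteq> vimg a b y \<Longrightarrow> vimg a b x \<inter> vimg a b y = {}"
    using vv_sub by (metis Int_commute subset_antisym)
  have hh: "\<And>x y. himg a b x \<noteq> himg a b y \<Longrightarrow> himg a b x \<inter> himg a b y = {}"
    using hh_sub by (metis Int_commute subset_antisym)
  have "card (geodesic_image a b P1 V1 \<inter> geodesic_image a b P2 V2) \<le> 2"
  proof -
    have vh2: "\<And>x y. card (himg a b y \<inter> vimg a b x) \<le> 2"
      using card_vh by (simp add: Int_commute)
    from c1 c2 show ?thesis
    proof (elim disjE)
      assume "geodesic_image a b P1 V1 = vimg a b (fst P1)" "geodesic_image a b P2 V2 = vimg a b (fst P2)"
      then show ?thesis using vv assms(5) by simp
    next
      assume "geodesic_image a b P1 V1 = himg a b (snd P1)" "geodesic_image a b P2 V2 = himg a b (snd P2)"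
      then show ?thesis using hh assms(5) by simp
    next
      assume "geodesic_image a b P1 V1 = vimg a b (fst P1)" "geodesic_image a b P2 V2 = himg a b (snd P2)"
      then show ?thesis using card_vh by simp
    next
      assume "geodesic_image a b P1 V1 = himg a b (snd P1)" "geodesic_image a b P2 V2 = vimg a b (fst P2)"
      then show ?thesis using vh2 by simp
    qed
  qed
  then show ?thesis by linarith
qed

end
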